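(* Let $N$, $i$, $k$ be positive integers with $k\le N$ and $N/(i+1)\le k\le N/i$, and suppose $N$ is a multiple of every integer in $[2,i]$. Then $$I_N\!\left(\frac{1}{k}\right)=2+N\sum_{j=1}^{i}\frac{\varphi(j)}{j}-k\,\Phi(i),$$ where $\Phi(i)=\sum_{j=1}^{i}\varphi(j)$.
   Context: $\varphi$ is Euler's totient function and $\Phi(i)=\sum_{j=1}^{i}\varphi(j)$ is the totient summatory function (equivalently $|F_i|-1$). For a positive integer $N$, the Farey sequence of order $N$, $F_N$, is the increasing list of all reduced fractions $h/k$ with $0\le h\le k\le N$ and $\gcd(h,k)=1$; it begins with $0/1$ and ends with $1/1$. For $x\in F_N$, $I_N(x)$ denotes the position of $x$ in $F_N$, indexed starting from $1$ (so $I_N(0/1)=1$). *)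

theory Defs
  imports "HOL-Number_Theory.Number_Theory"
begin

text \<open>Farey sequence of order N as a set of rationals: reduced fractions h/k with
  0 <= h <= k <= N.\<close>
definition farey :: "nat \<Rightarrow> rat set" where
  "farey N = {r. 0 \<le> r \<and> r \<le> 1 \<and> snd (quotient_of r) \<le> int N}"

text \<open>Position (1-indexed) of x in the increasingly sorted Farey sequence F_N.\<close>
definition farey_index :: "nat \<Rightarrow> rat \<Rightarrow> nat" where
  "farey_index N x = card {y \<in> farey N. y \<le> x}"

definition totient_sum :: "nat \<Rightarrow> nat" where
  "totient_sum i = (\<Sum>j=1..i. totient j)"

end

theory Submission
  imports Defs
begin

lemma coprime_shift: "coprime (a::nat) (m*a + r) \<longleftrightarrow> coprime a r"
  by (simp only: coprime_iff_gcd_eq_1 gcd_add_mult)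

lemma block_count:
  assumes "a > 0"
  shows "card {q. c*a < q \<and> q \<le> (c+n)*a \<and> coprime a q} = n * totient a"
proof (induction n)
  case 0 then show ?case by simp
next
  case (Suc n)
  have eq: "{q. c*a < q \<and> q \<le> (c+Suc n)*a \<and> coprime a q}
     = {q. c*a < q \<and> q \<le> (c+n)*a \<and> coprime a q} \<union> {q. (c+n)*a < q \<and> q \<le> (c+n)*a + a \<and> coprime a q}"
  proof -
    have ca: "c*a \<le> (c+n)*a" by simp
    show ?thesis using le_less_trans[OF ca] by auto
  qed
  have img: "{q. (c+n)*a < q \<and> q \<le> (c+n)*a + a \<and> coprime a q} = (\<lambda>r. (c+n)*a + r) ` totatives a"
  proof (intro equalityI subsetI)
    fix q assume q: "q \<in> {q. (c+n)*a < q \<and> q \<le> (c+n)*a + a \<and> coprime a q}"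
    define r where "r = q - (c+n)*a"
    have qr: "q = (c+n)*a + r" using q unfolding r_def by simp
    have r1: "0 < r" "r \<le> a" using q unfolding r_def by auto
    have "coprime a q" using q by simp
    then have "coprime a r" unfolding qr using coprime_shift[of a "c+n" r] by simp
    then have "r \<in> totatives a" using r1 by (simp add: in_totatives_iff coprime_commute)
    then show "q \<in> (\<lambda>r. (c+n)*a + r) ` totatives a" using qr by blast
  next
    fix q assume "q \<in> (\<lambda>r. (c+n)*a + r) ` totatives a"
    then obtain r where r: "r \<in> totatives a" "q = (c+n)*a + r" by blast
    then have r1: "0 < r" "r \<le> a" "coprime a r" by (simp_all add: in_totatives_iff coprime_commute)
    then have "coprime a q" unfolding r(2) using coprime_shift[of a "c+n" r] by simp
    then show "q \<in> {q. (c+n)*a < q \<and> q \<le> (c+n)*a + a \<and> coprime a q}"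
      using r(2) r1 by simp
  qed
  have bt: "card {q. (c+n)*a < q \<and> q \<le> (c+n)*a + a \<and> coprime a q} = totient a"
    unfolding img totient_def by (rule card_image) (simp add: inj_on_def)
  have un: "card ({q. c*a < q \<and> q \<le> (c+n)*a \<and> coprime a q} \<union> {q. (c+n)*a < q \<and> q \<le> (c+n)*a + a \<and> coprime a q})
     = card {q. c*a < q \<and> q \<le> (c+n)*a \<and> coprime a q} + card {q. (c+n)*a < q \<and> q \<le> (c+n)*a + a \<and> coprime a q}"
  proof (rule card_Un_disjoint)
    show "finite {q. c*a < q \<and> q \<le> (c+n)*a \<and> coprime a q}"
      by (rule finite_subset[of _ "{..(c+n)*a}"]) auto
    show "finite {q. (c+n)*a < q \<and> q \<le> (c+n)*a + a \<and> coprime a q}"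
      by (rule finite_subset[of _ "{..(c+n)*a+a}"]) auto
    show "{q. c*a < q \<and> q \<le> (c+n)*a \<and> coprime a q} \<inter> {q. (c+n)*a < q \<and> q \<le> (c+n)*a + a \<and> coprime a q} = {}"
    proof (rule equals0I)
      fix q assume "q \<in> {q. c*a < q \<and> q \<le> (c+n)*a \<and> coprime a q} \<inter> {q. (c+n)*a < q \<and> q \<le> (c+n)*a + a \<and> coprime a q}"
      then have "q \<le> (c+n)*a" "(c+n)*a < q" by auto
      then show False by linarith
    qed
  qed
  show ?case
    by (simp only: eq un bt Suc.IH) simp
qed

lemma qof:
  assumes "0 < q" "coprime h q"
  shows "quotient_of (of_nat h / of_nat q :: rat) = (int h, int q)"
proof -
  have eq: "(of_nat h / of_nat q :: rat) = Fract (int h) (int q)"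
    by (simp add: Fract_of_int_quotient)
  have "quotient_of (Fract (int h) (int q)) = (int h, int q)"
    unfolding quotient_of_Fract using assms by (intro normalize_stable) auto
  then show ?thesis by (simp only: eq)
qed

theorem theorem3:
  fixes N i k :: nat
  assumes "N > 0" "i > 0" "k > 0" "k \<le> N"
    and "real N / real (i + 1) \<le> real k" "real k \<le> real N / real i"
    and "\<forall>j\<in>{2..i}. j dvd N"
  shows "real (farey_index N (1 / of_nat k))
       = 2 + real N * (\<Sum>j=1..i. real (totient j) / real j) - real k * real (totient_sum i)"
proof -
  have le1: "N \<le> (i+1)*k"
  proof -
    have "real N \<le> real k * real (i+1)" using assms(5) by (simp add: field_simps)
    then have "real N \<le> real ((i+1)*k)" by (simp add: algebra_simps)
    then show ?thesis by linarith
  qed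
  have le2: "i*k \<le> N"
  proof -
    have "real k * real i \<le> real N" using assms(6) assms(2) by (simp add: field_simps)
    then have "real (i*k) \<le> real N" by (simp add: ac_simps)
    then show ?thesis by linarith
  qed
  define S where "S = {y \<in> farey N. y \<le> 1 / of_nat k}"
  define T where "T = {(h::nat,q::nat). 0<q \<and> q \<le> N \<and> coprime h q \<and> h*k \<le> q}"
  define f where "f = (\<lambda>(h::nat,q::nat). (of_nat h / of_nat q :: rat))"
  have bij: "bij_betw f T S"
  proof (rule bij_betwI')
    fix x y assume "x \<in> T" "y \<in> T"
    then obtain h q h' q' where x: "x = (h,q)" "0<q" "coprime h q" and y: "y = (h',q')" "0<q'" "coprime h' q'"
      unfolding T_def by auto
    show "(f x = f y) = (x = y)"
    proof
      assume "f x = f y"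
      then have "quotient_of (f x) = quotient_of (f y)" by simp
      then show "x = y" using x y qof by (simp add: f_def)
    qed simp
  next
    fix x assume "x \<in> T"
    then obtain h q where x: "x = (h,q)" "0<q" "q \<le> N" "coprime h q" "h*k \<le> q"
      unfolding T_def by auto
    have "h \<le> h*k" using assms(3) by simp
    then have "h \<le> q" using x(5) by linarith
    have "(of_nat h / of_nat q :: rat) \<le> 1 / of_nat k"
    proof -
      have "rat_of_nat (h*k) \<le> of_nat q" using x(5) by (simp only: of_nat_le_iff)
      then show ?thesis using x(2) assms(3) by (simp add: field_simps)
    qed
    moreover have "(of_nat h / of_nat q :: rat) \<le> 1" using \<open>h \<le> q\<close> x(2) by simp
    ultimately show "f x \<in> S" using x qof[OF x(2) x(4)]
      by (simp add: S_def f_def farey_def)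
  next
    fix y assume "y \<in> S"
    then have y0: "0 \<le> y" and y1: "y \<le> 1 / of_nat k" and yN: "snd (quotient_of y) \<le> int N"
      by (auto simp: S_def farey_def)
    obtain p d where pd: "quotient_of y = (p,d)" by fastforce
    have d0: "d > 0" using pd quotient_of_denom_pos by blast
    have cp: "coprime p d" using pd quotient_of_coprime by blast
    have yeq: "y = of_int p / of_int d" using pd quotient_of_div by blast
    have p0: "p \<ge> 0" using y0 d0 yeq by (simp add: zero_le_divide_iff)
    have "of_int p / of_int d \<le> (1::rat) / of_nat k" using y1 yeq by simp
    then have "of_int p * of_nat k \<le> (of_int d :: rat)" using d0 assms(3) by (simp add: field_simps)
    then have "of_int (p * int k) \<le> (of_int d :: rat)" by simp
    then have pk: "p * int k \<le> d" by (simp only: of_int_le_iff)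
    define h where "h = nat p"
    define q where "q = nat d"
    have hq: "int h = p" "int q = d" using p0 d0 by (auto simp: h_def q_def)
    have q0: "0 < q" using d0 hq by linarith
    have qN: "q \<le> N" using yN pd hq by simp
    have cphq: "coprime h q" using cp hq by (metis coprime_int_iff)
    have "int (h*k) \<le> int q" using pk hq by simp
    then have hk: "h*k \<le> q" by linarith
    have "(h,q) \<in> T" unfolding T_def using q0 qN cphq hk by blast
    moreover have "y = f (h,q)" using yeq by (simp add: f_def flip: hq)
    ultimately show "\<exists>x\<in>T. y = f x" by blast
  qed
  have cardST: "card S = card T" using bij_betw_same_card[OF bij] by simp
  define B where "B = (\<lambda>h. {q. h*k \<le> q \<and> q \<le> N \<and> coprime h q})"
  have Teq: "T = insert (0,1) (Sigma {1..i} B)"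
  proof (intro equalityI subsetI)
    fix x assume "x \<in> T"
    then obtain h q where x: "x = (h,q)" "0<q" "q \<le> N" "coprime h q" "h*k \<le> q"
      unfolding T_def by auto
    show "x \<in> insert (0,1) (Sigma {1..i} B)"
    proof (cases "h = 0")
      case True
      then have "q = 1" using x(4) by simp
      then show ?thesis using x True by simp
    next
      case False
      have "h \<le> i"
      proof (rule ccontr)
        assume "\<not> h \<le> i"
        then have hi: "i+1 \<le> h" by simp
        have "(i+1)*k \<le> h*k" using hi by (rule mult_le_mono1)
        then have e1: "h*k = (i+1)*k" "q = N" using le1 x(3) x(5) by linarith+
        have "h = i+1" using e1(1) assms(3) mult_cancel2[of h k "i+1"] by linarith
        then have "coprime (i+1) ((i+1)*k)" using x(4) e1 le1 x(3) x(5) by simp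
        then have "coprime (i+1) (i+1)" by (simp only: coprime_mult_right_iff)
        then have "i+1 = 1" by (simp only: coprime_self nat_dvd_1_iff_1)
        then show False using assms(2) by simp
      qed
      then show ?thesis using False x unfolding B_def by auto
    qed
  next
    fix x assume x: "x \<in> insert (0,1) (Sigma {1..i} B)"
    show "x \<in> T"
    proof (cases "x = (0,1)")
      case True then show ?thesis using assms(1) unfolding T_def by simp
    next
      case False
      then obtain h q where hq: "x = (h,q)" "1 \<le> h" "h \<le> i" "h*k \<le> q" "q \<le> N" "coprime h q"
        using x unfolding B_def by auto
      have "1 \<le> h*k" using hq(2) assms(3) by simp
      then have "0 < q" using hq(4) by linarith
      then show ?thesis using hq unfolding T_def by simp
    qed
  qed
  have finB: "finite (B h)" for h
    unfolding B_def by (rule finite_subset[of _ "{..N}"]) auto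
  have cardT: "card T = 1 + (\<Sum>h\<in>{1..i}. card (B h))"
  proof -
    have "(0,1) \<notin> Sigma {1..i} B" by simp
    moreover have "finite (Sigma {1..i} B)" using finB by auto
    ultimately have "card T = Suc (card (Sigma {1..i} B))" unfolding Teq by simp
    moreover have "card (Sigma {1..i} B) = (\<Sum>h\<in>{1..i}. card (B h))"
      using finB by (simp add: card_SigmaI)
    ultimately show ?thesis by simp
  qed
  have cardB: "card (B h) = (if h = 1 then 1 else 0) + (N div h - k) * totient h"
    if h: "h \<in> {1..i}" for h
  proof -
    have hd: "h dvd N" using h assms(7) by (cases "h = 1") auto
    define d where "d = N div h"
    have Nd: "N = d*h" using hd unfolding d_def by simp
    have h0: "0 < h" using h by simp
    have "h*k \<le> i*k" using h by simp
    moreover have "N = h*d" using Nd by simp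
    ultimately have "h*k \<le> h*d" using le2 by linarith
    then have kd: "k \<le> d" using h0 by simp
    have Beq: "B h = {q. k*h < q \<and> q \<le> (k+(d-k))*h \<and> coprime h q} \<union> {q. q = h*k \<and> coprime h q}"
      unfolding B_def using kd Nd by (auto simp: mult.commute)
    have c1: "card {q. k*h < q \<and> q \<le> (k+(d-k))*h \<and> coprime h q} = (d-k) * totient h"
      by (rule block_count[OF h0])
    have c2: "card {q. q = h*k \<and> coprime h q} = (if h = 1 then 1 else 0)"
    proof (cases "h = 1")
      case True then show ?thesis by simp
    next
      case False
      have "\<not> coprime h (h*k)" using False by simp
      then have "{q. q = h*k \<and> coprime h q} = {}" by auto
      then show ?thesis using False by simp
    qed
    have "card (B h) = card {q. k*h < q \<and> q \<le> (k+(d-k))*h \<and> coprime h q} + card {q. q = h*k \<and> coprime h q}"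
      unfolding Beq
    proof (rule card_Un_disjoint)
      show "finite {q. k*h < q \<and> q \<le> (k+(d-k))*h \<and> coprime h q}"
        by (rule finite_subset[of _ "{..(k+(d-k))*h}"]) auto
      show "finite {q. q = h*k \<and> coprime h q}" by simp
      show "{q. k*h < q \<and> q \<le> (k+(d-k))*h \<and> coprime h q} \<inter> {q. q = h*k \<and> coprime h q} = {}"
        by (auto simp: mult.commute)
    qed
    then show ?thesis using c1 c2 unfolding d_def by simp
  qed
  have realB: "real (card (B h)) = (if h = 1 then 1 else 0) + (real N * (real (totient h) / real h) - real k * real (totient h))"
    if h: "h \<in> {1..i}" for h
  proof -
    have hd: "h dvd N" using h assms(7) by (cases "h = 1") auto
    have h0: "0 < h" using h by simp
    have "h*k \<le> i*k" using h by simp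
    then have "h*k \<le> N" using le2 by linarith
    then have "k \<le> N div h" using hd h0 by (metis dvd_mult_div_cancel mult_le_cancel1)
    then have "real (N div h - k) = real N / real h - real k"
      using hd by (simp add: of_nat_diff real_of_nat_div)
    then have "real ((N div h - k) * totient h) = (real N / real h - real k) * real (totient h)"
      by simp
    also have "\<dots> = real N * (real (totient h) / real h) - real k * real (totient h)"
      by (simp add: algebra_simps)
    finally show ?thesis using cardB[OF h] by simp
  qed
  have "real (farey_index N (1 / of_nat k)) = real (card T)"
    unfolding farey_index_def cardST[symmetric] S_def by simp
  also have "\<dots> = 1 + (\<Sum>h\<in>{1..i}. real (card (B h)))" unfolding cardT by simp
  also have "\<dots> = 1 + (\<Sum>h\<in>{1..i}. ((if h = 1 then 1 else 0) + (real N * (real (totient h) / real h) - real k * real (totient h))))"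
    using realB by simp
  also have "\<dots> = 1 + (\<Sum>h\<in>{1..i}. (if h = 1 then 1 else 0)) + (real N * (\<Sum>h\<in>{1..i}. real (totient h) / real h) - real k * (\<Sum>h\<in>{1..i}. real (totient h)))"
    by (simp add: sum.distrib sum_subtractf sum_distrib_left)
  also have "(\<Sum>h\<in>{1..i}. (if h = 1 then 1 else 0)::real) = 1" using assms(2) by simp
  also have "(\<Sum>h\<in>{1..i}. real (totient h)) = real (totient_sum i)"
    unfolding totient_sum_def by simp
  finally show ?thesis by simp
qed

end
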